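(* Let $M$ be a simple-$\mathcal F$-torsion-free $R$-module. Then: (a) $M$ is a prime module; (b) $M$ is uniform; (c) $\mathrm{Ann}_R(M)\in\mathcal F^*$.
   Context: Throughout, $R$ is a commutative Noetherian local ring with maximal ideal $\mathfrak m$, and $\mathcal F$ is a Gabriel topology on $R$: a nonempty set of ideals of $R$ such that (1) if $\mathfrak a\in\mathcal F$ and $\mathfrak a\subseteq\mathfrak b$ then $\mathfrak b\in\mathcal F$; (2) if $\mathfrak a,\mathfrak b\in\mathcal F$ then $\mathfrak a\cap\mathfrak b\in\mathcal F$; (3) if $\mathfrak b$ is an ideal and there is $\mathfrak a\in\mathcal F$ with $(\mathfrak b:r)\in\mathcal F$ for all $r\in\mathfrak a$, then $\mathfrak b\in\mathcal F$. For an $R$-module $X$ and an ideal $\mathfrak a$ put $X[\mathfrak a]=\{x\in X:\mathfrak a x=0\}$. $X$ is $\mathcal F$-torsion-free if $X[\mathfrak a]=0$ for all $\mathfrak a\in\mathcal F$ (equivalently $\mathrm{Ass}(X)\cap\mathcal F=\emptyset$). $M$ is simple-$\mathcal F$-torsion-free if $M\neq 0$, $M$ is $\mathcal F$-torsion-free, and for every submodule $0\neq U\subsetneq M$ the module $M/U$ is not $\mathcal F$-torsion-free. $\mathcal F^*$ denotes the set of maximal elements (under inclusion) of $\mathrm{Spec}(R)\setminus\mathcal F$. A module $M\ne 0$ is prime if every $r\in R$ acts on $M$ either as zero or injectively (equivalently, $\mathrm{Ann}_R(M)=\mathrm{Ann}_R(U)$ for all nonzero submodules $U$). A module is uniform if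 it is nonzero and any two nonzero submodules intersect nontrivially. *)

theory Defs
  imports Complex_Main
begin

definition is_ideal :: "'a::comm_ring_1 set \<Rightarrow> bool" where
  "is_ideal I \<longleftrightarrow> 0 \<in> I \<and> (\<forall>x\<in>I. \<forall>y\<in>I. x + y \<in> I) \<and> (\<forall>r. \<forall>x\<in>I. r * x \<in> I)"

definition prime_ideal :: "'a::comm_ring_1 set \<Rightarrow> bool" where
  "prime_ideal P \<longleftrightarrow> is_ideal P \<and> P \<noteq> UNIV \<and> (\<forall>r s. r * s \<in> P \<longrightarrow> r \<in> P \<or> s \<in> P)"

definition maximal_ideal :: "'a::comm_ring_1 set \<Rightarrow> bool" where
  "maximal_ideal m \<longleftrightarrow> is_ideal m \<and> m \<noteq> UNIV \<and>
     (\<forall>J. is_ideal J \<longrightarrow> m \<subseteq> J \<longrightarrow> J = m \<or> J = UNIV)"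

definition noetherian_ring :: "'a::comm_ring_1 itself \<Rightarrow> bool" where
  "noetherian_ring _ \<longleftrightarrow>
     (\<forall>f :: nat \<Rightarrow> 'a set. (\<forall>n. is_ideal (f n)) \<longrightarrow> (\<forall>n. f n \<subseteq> f (Suc n)) \<longrightarrow>
        (\<exists>n. \<forall>m\<ge>n. f m = f n))"

definition local_ring :: "'a::comm_ring_1 itself \<Rightarrow> bool" where
  "local_ring _ \<longleftrightarrow> (\<exists>!m :: 'a set. maximal_ideal m)"

definition colon :: "'a::comm_ring_1 set \<Rightarrow> 'a \<Rightarrow> 'a set" where
  "colon b r = {s. s * r \<in> b}"

definition gabriel_topology :: "'a::comm_ring_1 set set \<Rightarrow> bool" where
  "gabriel_topology F \<longleftrightarrow>
     F \<noteq> {} \<and> (\<forall>a\<in>F. is_ideal a) \<and>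
     (\<forall>a b. a \<in> F \<longrightarrow> is_ideal b \<longrightarrow> a \<subseteq> b \<longrightarrow> b \<in> F) \<and>
     (\<forall>a\<in>F. \<forall>b\<in>F. a \<inter> b \<in> F) \<and>
     (\<forall>b. is_ideal b \<longrightarrow> (\<exists>a\<in>F. \<forall>r\<in>a. colon b r \<in> F) \<longrightarrow> b \<in> F)"

definition F_star :: "'a::comm_ring_1 set set \<Rightarrow> 'a set set" where
  "F_star F = {P. prime_ideal P \<and> P \<notin> F \<and>
      (\<forall>Q. prime_ideal Q \<longrightarrow> Q \<notin> F \<longrightarrow> P \<subseteq> Q \<longrightarrow> Q = P)}"

(* Modules: the module M is the whole type 'b with scalar multiplication scale
   (locale module from Main); submodules are module.subspace. *)

definition ann :: "('a::comm_ring_1 \<Rightarrow> 'b::ab_group_add \<Rightarrow> 'b) \<Rightarrow> 'b set \<Rightarrow> 'a set" where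
  "ann scale U = {r. \<forall>x\<in>U. scale r x = 0}"

definition F_torsion_free ::
  "'a::comm_ring_1 set set \<Rightarrow> ('a \<Rightarrow> 'b::ab_group_add \<Rightarrow> 'b) \<Rightarrow> bool" where
  "F_torsion_free F scale \<longleftrightarrow>
     (\<forall>a\<in>F. \<forall>x. (\<forall>r\<in>a. scale r x = 0) \<longrightarrow> x = 0)"

(* M/U is F-torsion-free: (M/U)[a] = 0 for all a in F, i.e. for every coset x+U,
   a(x+U) = 0 in M/U (a x \<subseteq> U) implies x+U = 0 (x \<in> U). *)
definition quot_F_torsion_free ::
  "'a::comm_ring_1 set set \<Rightarrow> ('a \<Rightarrow> 'b::ab_group_add \<Rightarrow> 'b) \<Rightarrow> 'b set \<Rightarrow> bool" where
  "quot_F_torsion_free F scale U \<longleftrightarrow>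
     (\<forall>a\<in>F. \<forall>x. (\<forall>r\<in>a. scale r x \<in> U) \<longrightarrow> x \<in> U)"

definition simple_F_torsion_free ::
  "'a::comm_ring_1 set set \<Rightarrow> ('a \<Rightarrow> 'b::ab_group_add \<Rightarrow> 'b) \<Rightarrow> bool" where
  "simple_F_torsion_free F scale \<longleftrightarrow>
     (UNIV :: 'b set) \<noteq> {0} \<and> F_torsion_free F scale \<and>
     (\<forall>U. module.subspace scale U \<longrightarrow> U \<noteq> {0} \<longrightarrow> U \<noteq> UNIV \<longrightarrow>
        \<not> quot_F_torsion_free F scale U)"

definition prime_module :: "('a::comm_ring_1 \<Rightarrow> 'b::ab_group_add \<Rightarrow> 'b) \<Rightarrow> bool" where
  "prime_module scale \<longleftrightarrow> (UNIV :: 'b set) \<noteq> {0} \<and>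
     (\<forall>r. (\<forall>x. scale r x = 0) \<or> inj (scale r))"

definition uniform_module :: "('a::comm_ring_1 \<Rightarrow> 'b::ab_group_add \<Rightarrow> 'b) \<Rightarrow> bool" where
  "uniform_module scale \<longleftrightarrow> (UNIV :: 'b set) \<noteq> {0} \<and>
     (\<forall>U V. module.subspace scale U \<longrightarrow> module.subspace scale V \<longrightarrow>
        U \<noteq> {0} \<longrightarrow> V \<noteq> {0} \<longrightarrow> U \<inter> V \<noteq> {0})"

end

theory Submission
  imports Defs
begin

lemma closure_all:
  fixes F :: "'a::comm_ring_1 set set"
    and scale :: "'a \<Rightarrow> 'b::ab_group_add \<Rightarrow> 'b"
  assumes G: "gabriel_topology F"
    and M: "module scale"
    and S: "simple_F_torsion_free F scale"
    and U: "module.subspace scale U" and U0: "U \<noteq> {0}"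
  shows "\<exists>a\<in>F. \<forall>r\<in>a. scale r x \<in> U"
proof -
  interpret module scale by (rule M)
  define C where "C = {x. \<exists>a\<in>F. \<forall>r\<in>a. scale r x \<in> U}"
  have GG: "F \<noteq> {} \<and> (\<forall>a\<in>F. is_ideal a) \<and>
     (\<forall>a b. a \<in> F \<longrightarrow> is_ideal b \<longrightarrow> a \<subseteq> b \<longrightarrow> b \<in> F) \<and>
     (\<forall>a\<in>F. \<forall>b\<in>F. a \<inter> b \<in> F) \<and>
     (\<forall>b. is_ideal b \<longrightarrow> (\<exists>a\<in>F. \<forall>r\<in>a. colon b r \<in> F) \<longrightarrow> b \<in> F)"
    using G unfolding gabriel_topology_def .
  note Fne = conjunct1[OF GG]
  note Fid = conjunct1[OF conjunct2[OF GG]]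
  note Fup = conjunct1[OF conjunct2[OF conjunct2[OF GG]]]
  note Fint = conjunct1[OF conjunct2[OF conjunct2[OF conjunct2[OF GG]]]]
  note Fg = conjunct2[OF conjunct2[OF conjunct2[OF conjunct2[OF GG]]]]
  obtain a0 where a0: "a0 \<in> F" using Fne by auto
  have UC: "U \<subseteq> C"
  proof
    fix u assume "u \<in> U"
    then have "\<forall>r\<in>a0. scale r u \<in> U" using U subspace_scale by blast
    then show "u \<in> C" using a0 unfolding C_def by auto
  qed
  have subC: "subspace C"
    unfolding subspace_def
  proof (intro conjI ballI allI)
    show "0 \<in> C" using UC U subspace_0 by blast
  next
    fix x y assume "x \<in> C" "y \<in> C"
    then obtain a b where a: "a \<in> F" "\<forall>r\<in>a. scale r x \<in> U"
      and b: "b \<in> F" "\<forall>r\<in>b. scale r y \<in> U" unfolding C_def by auto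
    have "\<forall>r\<in>a \<inter> b. scale r (x + y) \<in> U"
      using a b U subspace_add by (simp add: scale_right_distrib)
    then show "x + y \<in> C" using Fint a b unfolding C_def by blast
  next
    fix c x assume "x \<in> C"
    then obtain a where a: "a \<in> F" "\<forall>r\<in>a. scale r x \<in> U" unfolding C_def by auto
    have "\<forall>r\<in>a. scale r (scale c x) \<in> U"
    proof
      fix r assume "r \<in> a"
      then have "scale c (scale r x) \<in> U" using a U subspace_scale by blast
      then show "scale r (scale c x) \<in> U" by (simp add: mult.commute)
    qed
    then show "scale c x \<in> C" using a unfolding C_def by auto
  qed
  have C0: "C \<noteq> {0}" using UC U0 U subspace_0 by blast
  have qtf: "quot_F_torsion_free F scale C"
    unfolding quot_F_torsion_free_def
  proof (intro ballI allI impI)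
    fix b x assume b: "b \<in> F" and bx: "\<forall>r\<in>b. scale r x \<in> C"
    define I where "I = {s. scale s x \<in> U}"
    have idI: "is_ideal I" unfolding is_ideal_def I_def
    proof (intro conjI ballI allI; simp)
      show "0 \<in> U" using subspace_0[OF U] .
    next
      fix p q assume "scale p x \<in> U" "scale q x \<in> U"
      then show "scale (p + q) x \<in> U" using subspace_add[OF U] by (simp add: scale_left_distrib)
    next
      fix t p assume "scale p x \<in> U"
      then have "scale t (scale p x) \<in> U" using subspace_scale[OF U] by blast
      then show "scale (t * p) x \<in> U" by simp
    qed
    have "\<forall>r\<in>b. colon I r \<in> F"
    proof
      fix r assume "r \<in> b"
      then obtain a where a: "a \<in> F" "\<forall>t\<in>a. scale t (scale r x) \<in> U"
        using bx unfolding C_def by auto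
      have "a \<subseteq> colon I r" using a(2) unfolding colon_def I_def by auto
      moreover have "is_ideal (colon I r)" using idI unfolding is_ideal_def colon_def
        by (auto simp: distrib_right mult.assoc)
      ultimately show "colon I r \<in> F" using Fup a(1) by blast
    qed
    then have "I \<in> F" using Fg idI b by blast
    then show "x \<in> C" unfolding C_def I_def by auto
  qed
  have "C = UNIV" using S subC C0 qtf unfolding simple_F_torsion_free_def by blast
  then show ?thesis unfolding C_def by auto
qed

theorem lemma1p1:
  fixes F :: "'a::comm_ring_1 set set"
    and scale :: "'a \<Rightarrow> 'b::ab_group_add \<Rightarrow> 'b"
  assumes "noetherian_ring TYPE('a)"
    and "local_ring TYPE('a)"
    and G: "gabriel_topology F"
    and M: "module scale"
    and S: "simple_F_torsion_free F scale"
  shows "prime_module scale \<and> uniform_module scale \<and> ann scale UNIV \<in> F_star F"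
proof -
  interpret module scale by (rule M)
  have GG: "F \<noteq> {} \<and> (\<forall>a\<in>F. is_ideal a) \<and>
     (\<forall>a b. a \<in> F \<longrightarrow> is_ideal b \<longrightarrow> a \<subseteq> b \<longrightarrow> b \<in> F) \<and>
     (\<forall>a\<in>F. \<forall>b\<in>F. a \<inter> b \<in> F) \<and>
     (\<forall>b. is_ideal b \<longrightarrow> (\<exists>a\<in>F. \<forall>r\<in>a. colon b r \<in> F) \<longrightarrow> b \<in> F)"
    using G unfolding gabriel_topology_def .
  note Fup = conjunct1[OF conjunct2[OF conjunct2[OF GG]]]
  have ne: "(UNIV :: 'b set) \<noteq> {0}" and tf: "F_torsion_free F scale"
    using S unfolding simple_F_torsion_free_def by auto
  note cl = closure_all[OF G M S]
  have prime: "prime_module scale"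
    unfolding prime_module_def
  proof (intro conjI allI ne)
    fix r
    show "(\<forall>x. scale r x = 0) \<or> inj (scale r)"
    proof (cases "inj (scale r)")
      case False
      then obtain y z where yz: "scale r y = scale r z" "y \<noteq> z" unfolding inj_def by blast
      define K where "K = {x. scale r x = 0}"
      have subK: "subspace K" unfolding subspace_def K_def
        by (auto simp: scale_right_distrib) (metis mult.commute scale_scale scale_zero_right)
      have "y - z \<in> K" "y - z \<noteq> 0" using yz by (auto simp: K_def scale_right_diff_distrib)
      then have K0: "K \<noteq> {0}" by blast
      have "\<forall>x. scale r x = 0"
      proof
        fix x
        obtain a where a: "a \<in> F" "\<forall>t\<in>a. scale t x \<in> K" using cl[OF subK K0] by blast
        have "\<forall>t\<in>a. scale t (scale r x) = 0" using a(2) unfolding K_def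
          by (auto simp: mult.commute)
        then show "scale r x = 0" using tf a(1) unfolding F_torsion_free_def by blast
      qed
      then show ?thesis by blast
    qed auto
  qed
  have annx: "\<And>r x. scale r x = 0 \<Longrightarrow> x \<noteq> 0 \<Longrightarrow> r \<in> ann scale UNIV"
  proof -
    fix r x assume "scale r x = 0" "x \<noteq> 0"
    then have e: "scale r x = scale r 0" by simp
    have "\<not> inj (scale r)"
    proof
      assume "inj (scale r)"
      from injD[OF this e] show False using \<open>x \<noteq> 0\<close> by simp
    qed
    then show "r \<in> ann scale UNIV" using prime unfolding prime_module_def ann_def by auto
  qed
  have unif: "uniform_module scale"
    unfolding uniform_module_def
  proof (intro conjI allI impI ne)
    fix U V assume U: "subspace U" and V: "subspace V" and U0: "U \<noteq> {0}" and V0: "V \<noteq> {0}"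
    show "U \<inter> V \<noteq> {0}"
    proof
      assume UV: "U \<inter> V = {0}"
      obtain x where x: "x \<in> V" "x \<noteq> 0" using V0 V subspace_0 by blast
      obtain a where a: "a \<in> F" "\<forall>t\<in>a. scale t x \<in> U" using cl[OF U U0] by blast
      have "\<forall>t\<in>a. scale t x \<in> V" using x V subspace_scale by blast
      then have "\<forall>t\<in>a. scale t x = 0" using a UV by blast
      then show False using tf a(1) x unfolding F_torsion_free_def by blast
    qed
  qed
  define P where "P = ann scale UNIV"
  obtain x0 :: 'b where x0: "x0 \<noteq> 0" using ne by blast
  have idP: "is_ideal P" unfolding P_def ann_def is_ideal_def
    by (auto simp: scale_left_distrib) (metis scale_scale scale_zero_right)
  have Pnot: "P \<noteq> UNIV"
  proof
    assume "P = UNIV"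
    then have "(1::'a) \<in> ann scale UNIV" unfolding P_def by simp
    then have "scale 1 x0 = 0" unfolding ann_def by blast
    then show False using x0 by simp
  qed
  have primeP: "prime_ideal P"
    unfolding prime_ideal_def
  proof (intro conjI idP Pnot allI impI)
    fix r s assume rs: "r * s \<in> P"
    show "r \<in> P \<or> s \<in> P"
    proof (cases "s \<in> P")
      case False
      then have inj: "inj (scale s)" using prime unfolding prime_module_def P_def ann_def by auto
      have "\<forall>x. scale r x = 0"
      proof
        fix x
        have "scale s (scale r x) = scale s 0" using rs unfolding P_def ann_def
          by (simp add: mult.commute)
        then show "scale r x = 0" by (rule injD[OF inj])
      qed
      then show ?thesis unfolding P_def ann_def by auto
    qed auto
  qed
  have PF: "P \<notin> F"
  proof
    assume PF: "P \<in> F"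
    have "\<forall>r\<in>P. scale r x0 = 0" unfolding P_def ann_def by blast
    then have "x0 = 0" using tf PF unfolding F_torsion_free_def by blast
    then show False using x0 by simp
  qed
  have maxP: "\<forall>Q. prime_ideal Q \<longrightarrow> Q \<notin> F \<longrightarrow> P \<subseteq> Q \<longrightarrow> Q = P"
  proof (intro allI impI)
    fix Q assume Q: "prime_ideal Q" "Q \<notin> F" "P \<subseteq> Q"
    have idQ: "is_ideal Q" using Q unfolding prime_ideal_def by auto
    show "Q = P"
    proof (rule ccontr)
      assume "Q \<noteq> P"
      then obtain q where q: "q \<in> Q" "q \<notin> P" using Q(3) by blast
      define W where "W = {y. \<exists>t\<in>Q. y = scale t x0}"
      have W1: "0 \<in> W"
      proof -
        have "(0::'a) \<in> Q" using idQ unfolding is_ideal_def by blast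
        then show ?thesis unfolding W_def by (auto intro!: bexI[of _ 0])
      qed
      have W2: "x + y \<in> W" if xyW: "x \<in> W" "y \<in> W" for x y
      proof -
        obtain t u where tu: "t \<in> Q" "u \<in> Q" "x = scale t x0" "y = scale u x0"
          using xyW unfolding W_def by blast
        have "t + u \<in> Q" using tu idQ unfolding is_ideal_def by blast
        moreover have "x + y = scale (t + u) x0" using tu by (simp add: scale_left_distrib)
        ultimately show ?thesis unfolding W_def by blast
      qed
      have W3: "scale c x \<in> W" if xW: "x \<in> W" for c x
      proof -
        obtain t where t: "t \<in> Q" "x = scale t x0" using xW unfolding W_def by blast
        have "c * t \<in> Q" using t idQ unfolding is_ideal_def by blast
        moreover have "scale c x = scale (c * t) x0" using t by simp
        ultimately show ?thesis unfolding W_def by blast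
      qed
      have subW: "subspace W" unfolding subspace_def using W1 W2 W3 by blast
      have "scale q x0 \<noteq> 0" using annx q(2) x0 unfolding P_def by blast
      moreover have "scale q x0 \<in> W" using q unfolding W_def by auto
      ultimately have W0: "W \<noteq> {0}" by blast
      obtain a where a: "a \<in> F" "\<forall>t\<in>a. scale t x0 \<in> W" using cl[OF subW W0] by blast
      have "\<not> a \<subseteq> Q" using Fup a(1) idQ Q(2) by blast
      then obtain s where s: "s \<in> a" "s \<notin> Q" by blast
      then obtain t where t: "t \<in> Q" "scale s x0 = scale t x0" using a(2) unfolding W_def by auto
      have "scale (s - t) x0 = 0" using t by (simp add: scale_left_diff_distrib)
      then have "s - t \<in> P" using annx x0 unfolding P_def by blast
      then have "s - t \<in> Q" using Q(3) by blast
      then have "(s - t) + t \<in> Q" using t idQ unfolding is_ideal_def by blast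
      then show False using s by simp
    qed
  qed
  have "P \<in> F_star F" unfolding F_star_def using primeP PF maxP by blast
  then show ?thesis using prime unif unfolding P_def by blast
qed

end
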